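(* Let $m\ge 2$ and $n\ge1$ be integers with $m(n-1)$ even, let ${\bf h}\in\mathbb{R}^{m(n-1)+1}$, let $\mathcal{H}$ be the $m^{\rm th}$-order $n$-dimensional Hankel tensor generated by ${\bf h}$, and let $H$ be the associated Hankel matrix of $\mathcal{H}$. If $H$ has no negative (resp. no non-positive, no positive, no nonnegative) eigenvalues, then $\mathcal{H}$ has no negative (resp. no non-positive, no positive, no nonnegative) H-eigenvalues.
   Context: The Hankel tensor generated by ${\bf h}=(h_0,\dots,h_{m(n-1)})$ has entries $\mathcal{H}_{i_1\dots i_m}=h_{i_1+\dots+i_m}$, $0\le i_j\le n-1$; its associated Hankel matrix is the square matrix $H$ with $H_{ij}=h_{i+j}$, $0\le i,j\le m(n-1)/2$. For a real $m^{\rm th}$-order $n$-dimensional tensor $\mathcal{T}$, $(\mathcal{T}{\bf x}^{m-1})_i=\sum_{i_2,\dots,i_m}\mathcal{T}_{i i_2\dots i_m}x_{i_2}\cdots x_{i_m}$, and a real number $\lambda$ is an H-eigenvalue of $\mathcal{T}$ if there is a nonzero ${\bf x}\in\mathbb{R}^n$ with $\mathcal{T}{\bf x}^{m-1}=\lambda{\bf x}^{[m-1]}$, ${\bf x}^{[m-1]}=(x_1^{m-1},\dots,x_n^{m-1})^\top$. *)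

theory Defs
  imports Complex_Main "Jordan_Normal_Form.Char_Poly"
begin

text \<open>A real m-th order n-dimensional tensor is represented as a function from index
  lists (of length m, entries in {0..<n}) to reals; vectors in R^n as functions
  nat => real, of which only the entries at indices < n matter. Indices are 0-based.\<close>

definition tensor_apply :: "nat \<Rightarrow> nat \<Rightarrow> (nat list \<Rightarrow> real) \<Rightarrow> (nat \<Rightarrow> real) \<Rightarrow> nat \<Rightarrow> real" where
  "tensor_apply m n T x i =
     (\<Sum>js \<in> {js. length js = m - 1 \<and> set js \<subseteq> {..<n}}. T (i # js) * prod_list (map x js))"

definition H_eigenvalue :: "nat \<Rightarrow> nat \<Rightarrow> (nat list \<Rightarrow> real) \<Rightarrow> real \<Rightarrow> bool" where
  "H_eigenvalue m n T lam \<longleftrightarrow>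
     (\<exists>x :: nat \<Rightarrow> real. (\<exists>i<n. x i \<noteq> 0) \<and>
        (\<forall>i<n. tensor_apply m n T x i = lam * x i ^ (m - 1)))"

definition hankel_tensor :: "(nat \<Rightarrow> real) \<Rightarrow> nat list \<Rightarrow> real" where
  "hankel_tensor h is = h (sum_list is)"

definition hankel_matrix :: "nat \<Rightarrow> nat \<Rightarrow> (nat \<Rightarrow> real) \<Rightarrow> real mat" where
  "hankel_matrix m n h = mat (m * (n - 1) div 2 + 1) (m * (n - 1) div 2 + 1) (\<lambda>(i, j). h (i + j))"

end

theory Submission imports Defs "HOL-Analysis.Function_Topology" "HOL-Analysis.Abstract_Limits" begin


lemma quad_zero:
  fixes b c :: real
  assumes "\<And>t. 0 \<le> 2*t*b + t^2*c"
  shows "b = 0"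
proof (rule ccontr)
  assume b: "b \<noteq> 0"
  define t where "t = - b / (\<bar>c\<bar> + 1)"
  have pos: "\<bar>c\<bar> + 1 > 0" by simp
  have td: "t * (\<bar>c\<bar> + 1) = - b" unfolding t_def using pos by simp
  have "(\<bar>c\<bar>+1)^2 * (2*t*b + t^2*\<bar>c\<bar>) = 2*(\<bar>c\<bar>+1)*(t*(\<bar>c\<bar> + 1))*b + (t*(\<bar>c\<bar> + 1))^2*\<bar>c\<bar>"
    by (simp add: power2_eq_square algebra_simps)
  also have "\<dots> = b^2 * (\<bar>c\<bar> - 2*(\<bar>c\<bar>+1))" unfolding td by (simp add: power2_eq_square algebra_simps)
  also have "\<dots> < 0" using b by (intro mult_pos_neg) auto
  finally have "2*t*b + t^2*\<bar>c\<bar> < 0" using pos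
    by (metis mult_less_0_iff not_square_less_zero zero_less_power)
  moreover have "2*t*b + t^2*c \<le> 2*t*b + t^2*\<bar>c\<bar>"
    by (simp add: mult_left_mono)
  ultimately have "2*t*b + t^2*c < 0" by linarith
  thus False using assms[of t] by simp
qed

lemma sym_min_eig:
  fixes A :: "nat \<Rightarrow> nat \<Rightarrow> real" and K :: nat
  assumes K: "K > 0" and sym: "\<And>i j. A i j = A j i"
  shows "\<exists>v \<mu>. (\<exists>i<K. v i \<noteq> 0) \<and> (\<forall>i<K. (\<Sum>j<K. A i j * v j) = \<mu> * v i) \<and>
     (\<forall>u. \<mu> * (\<Sum>i<K. u i ^ 2) \<le> (\<Sum>i<K. \<Sum>j<K. A i j * u i * u j))"
proof -
  define qf where "qf u = (\<Sum>i<K. \<Sum>j<K. A i j * u i * u j)" for u :: "nat \<Rightarrow> real"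
  define nr where "nr u = (\<Sum>i<K. u i ^ 2)" for u :: "nat \<Rightarrow> real"
  define X where "X = product_topology (\<lambda>_::nat. euclideanreal) UNIV"
  define C where "C = PiE UNIV (\<lambda>i. if i < K then {-1..1::real} else {0})"
  define S where "S = C \<inter> {x \<in> topspace X. nr x \<in> {1}}"
  have cC: "compactin X C" unfolding X_def C_def
    by (subst compactin_PiE) auto
  have contq: "continuous_map X euclideanreal qf" unfolding qf_def X_def
    by (intro continuous_intros) auto
  have contn: "continuous_map X euclideanreal nr" unfolding nr_def X_def
    by (intro continuous_intros) auto
  have "closedin X {x \<in> topspace X. nr x \<in> {1}}"
    by (rule closedin_continuous_map_preimage[OF contn]) auto
  hence cS: "compactin X S" unfolding S_def using cC compact_Int_closedin by blast
  have topX: "topspace X = UNIV" unfolding X_def by simp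
  have S_iff: "u \<in> S \<longleftrightarrow> (\<forall>i. if i < K then \<bar>u i\<bar> \<le> 1 else u i = 0) \<and> nr u = 1" for u
    unfolding S_def C_def topX by (auto simp: PiE_def Pi_def abs_le_iff split: if_splits) 
  define e0 where "e0 = (\<lambda>i::nat. if i = 0 then 1 else (0::real))"
  have "(\<Sum>i<K. e0 i ^ 2) = (\<Sum>i<K. if i = 0 then 1 else 0)"
    by (rule sum.cong) (auto simp: e0_def)
  hence "e0 \<in> S" unfolding S_iff nr_def using K by (auto simp: e0_def)
  hence ne: "qf ` S \<noteq> {}" by auto
  have "compact (qf ` S)"
    using image_compactin[OF cS contq] by simp
  from compact_attains_inf[OF this ne] obtain v where vS: "v \<in> S" and vmin: "\<And>u. u \<in> S \<Longrightarrow> qf v \<le> qf u"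
    by auto
  define \<mu> where "\<mu> = qf v"
  have qf_scale: "qf (\<lambda>i. a * u i) = a^2 * qf u" for a u
    unfolding qf_def by (simp add: sum_distrib_left power2_eq_square algebra_simps)
  have nr_scale: "nr (\<lambda>i. a * u i) = a^2 * nr u" for a u
    unfolding nr_def by (simp add: sum_distrib_left power_mult_distrib)
  have ray: "\<mu> * nr u \<le> qf u" for u
  proof -
    define u' where "u' = (\<lambda>i. if i < K then u i else 0)"
    have nu: "nr u' = nr u" unfolding nr_def u'_def by (rule sum.cong) auto
    have qu: "qf u' = qf u" unfolding qf_def u'_def by (intro sum.cong) auto
    show ?thesis
    proof (cases "nr u = 0")
      case True
      hence "\<forall>i\<in>{..<K}. u i ^ 2 = 0" unfolding nr_def
        by (subst sum_nonneg_eq_0_iff[symmetric]) auto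
      hence "qf u = 0" unfolding qf_def by auto
      thus ?thesis using True by simp
    next
      case False
      define r where "r = nr u"
      have r0: "r > 0" using False unfolding r_def nr_def
        by (metis order_le_less sum_nonneg zero_le_power2)
      define w where "w = (\<lambda>i. (1 / sqrt r) * u' i)"
      have "nr w = 1" unfolding w_def nr_scale nu r_def[symmetric] using r0
        by (simp add: power_divide)
      moreover have "\<bar>w i\<bar> \<le> 1" if "i < K" for i
      proof -
        have "u i ^ 2 \<le> r" unfolding r_def nr_def
          by (rule member_le_sum) (use that in auto)
        hence "\<bar>u i\<bar> \<le> sqrt r" by (simp add: real_le_rsqrt)
        thus ?thesis unfolding w_def u'_def using that r0 by (simp add: abs_mult divide_simps)
      qed
      ultimately have "w \<in> S" unfolding S_iff by (auto simp: w_def u'_def)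
      hence "\<mu> \<le> qf w" unfolding \<mu>_def by (rule vmin)
      also have "qf w = qf u / r" unfolding w_def qf_scale qu using r0
        by (simp add: power_divide)
      finally show ?thesis using r0 unfolding r_def[symmetric] by (simp add: field_simps)
    qed
  qed
  have nv: "nr v = 1" using vS S_iff by auto
  have vnz: "\<exists>i<K. v i \<noteq> 0"
  proof (rule ccontr)
    assume "\<not> ?thesis"
    hence "nr v = 0" unfolding nr_def by auto
    thus False using nv by simp
  qed
  have eig: "(\<Sum>j<K. A k j * v j) = \<mu> * v k" if k: "k < K" for k
  proof -
    define e where "e = (\<lambda>i::nat. if i = k then 1 else (0::real))"
    have md: "\<And>(a::real) P. a * (if P then 1 else 0) = (if P then a else 0)" by simp
    have nre: "nr (\<lambda>i. v i + t * e i) = nr v + 2 * t * v k + t^2" for t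
    proof -
      have "nr (\<lambda>i. v i + t * e i) = (\<Sum>i<K. v i ^ 2 + (2 * t * v i + t^2) * e i)"
        unfolding nr_def by (rule sum.cong) (auto simp: e_def power2_eq_square algebra_simps)
      also have "\<dots> = nr v + (\<Sum>i<K. (2 * t * v i + t^2) * e i)"
        unfolding nr_def sum.distrib by simp
      also have "(\<Sum>i<K. (2 * t * v i + t^2) * e i) = 2 * t * v k + t^2"
        using k by (simp add: e_def if_distrib cong: if_cong)
      finally show ?thesis by simp
    qed
    have qfe: "qf (\<lambda>i. v i + t * e i) = qf v + 2 * t * (\<Sum>j<K. A k j * v j) + t^2 * A k k" for t
    proof -
      have "qf (\<lambda>i. v i + t * e i) = (\<Sum>i<K. \<Sum>j<K. A i j * v i * v j + t * (A i j * e i * v j)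
           + t * (A i j * v i * e j) + t^2 * (A i j * e i * e j))"
        unfolding qf_def by (intro sum.cong) (auto simp: power2_eq_square algebra_simps)
      also have "\<dots> = qf v + t * (\<Sum>i<K. \<Sum>j<K. A i j * e i * v j) + t * (\<Sum>i<K. \<Sum>j<K. A i j * v i * e j)
           + t^2 * (\<Sum>i<K. \<Sum>j<K. A i j * e i * e j)"
        unfolding qf_def by (simp add: sum.distrib sum_distrib_left)
      also have "(\<Sum>i<K. \<Sum>j<K. A i j * e i * v j) = (\<Sum>i<K. if i = k then (\<Sum>j<K. A i j * v j) else 0)"
        by (rule sum.cong) (auto simp: e_def)
      also have "\<dots> = (\<Sum>j<K. A k j * v j)" using k by simp
      also have "(\<Sum>i<K. \<Sum>j<K. A i j * v i * e j) = (\<Sum>i<K. A i k * v i)"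
        using k by (simp add: e_def if_distrib cong: if_cong)
      also have "\<dots> = (\<Sum>j<K. A k j * v j)" by (simp add: sym)
      also have "(\<Sum>i<K. \<Sum>j<K. A i j * e i * e j) = (\<Sum>i<K. if i = k then (\<Sum>j<K. if j = k then A i j else 0) else 0)"
        by (intro sum.cong) (auto simp: e_def md)
      also have "\<dots> = A k k" using k by simp
      finally show ?thesis by simp
    qed
    have "0 \<le> 2*t*((\<Sum>j<K. A k j * v j) - \<mu> * v k) + t^2 * (A k k - \<mu>)" for t
      using ray[of "\<lambda>i. v i + t * e i"] unfolding nre qfe nv \<mu>_def
      by (simp add: algebra_simps)
    from quad_zero[OF this] show ?thesis by simp
  qed
  show ?thesis
    by (rule exI[of _ v], rule exI[of _ \<mu>]) (use vnz eig ray in \<open>auto simp: nr_def qf_def\<close>)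
qed



definition Lset :: "nat \<Rightarrow> nat \<Rightarrow> nat list set" where
  "Lset n r = {js. length js = r \<and> set js \<subseteq> {..<n}}"
definition Ssum :: "nat \<Rightarrow> (nat \<Rightarrow> real) \<Rightarrow> nat \<Rightarrow> (nat \<Rightarrow> real) \<Rightarrow> real" where
  "Ssum n x r f = (\<Sum>js\<in>Lset n r. f (sum_list js) * prod_list (map x js))"
definition Lf :: "nat \<Rightarrow> (nat \<Rightarrow> real) \<Rightarrow> real poly \<Rightarrow> real" where
  "Lf D f P = (\<Sum>k<D. f k * coeff P k)"
definition pp :: "nat \<Rightarrow> (nat \<Rightarrow> real) \<Rightarrow> real poly" where
  "pp n x = (\<Sum>i<n. monom (x i) i)"
definition Bf :: "nat \<Rightarrow> (nat \<Rightarrow> real) \<Rightarrow> (nat \<Rightarrow> real) \<Rightarrow> (nat \<Rightarrow> real) \<Rightarrow> real" where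
  "Bf K h u v = (\<Sum>i<K. \<Sum>j<K. h (i + j) * u i * v j)"

lemma finite_Lset: "finite (Lset n r)"
proof -
  have "Lset n r = {xs. set xs \<subseteq> {..<n} \<and> length xs = r}" unfolding Lset_def by auto
  thus ?thesis by (simp add: finite_lists_length_eq)
qed

lemma Lset_0: "Lset n 0 = {[]}" unfolding Lset_def by auto

lemma Lset_Suc: "Lset n (Suc r) = (\<lambda>(i,js). i#js) ` ({..<n} \<times> Lset n r)"
  unfolding Lset_def by (auto simp: length_Suc_conv image_iff)

lemma Ssum_0: "Ssum n x 0 f = f 0"
  unfolding Ssum_def Lset_0 by simp

lemma Ssum_Suc: "Ssum n x (Suc r) f = (\<Sum>i<n. x i * Ssum n x r (\<lambda>k. f (i + k)))"
proof -
  have inj: "inj_on (\<lambda>(i,js). i#js) ({..<n} \<times> Lset n r)" by (auto simp: inj_on_def)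
  have "Ssum n x (Suc r) f = (\<Sum>(i,js)\<in>{..<n} \<times> Lset n r. f (i + sum_list js) * (x i * prod_list (map x js)))"
    unfolding Ssum_def Lset_Suc by (subst sum.reindex[OF inj]) (auto intro!: sum.cong)
  also have "\<dots> = (\<Sum>i<n. \<Sum>js\<in>Lset n r. f (i + sum_list js) * (x i * prod_list (map x js)))"
    by (subst sum.cartesian_product) auto
  also have "\<dots> = (\<Sum>i<n. x i * Ssum n x r (\<lambda>k. f (i + k)))"
    unfolding Ssum_def by (simp add: sum_distrib_left algebra_simps)
  finally show ?thesis .
qed

lemma Ssum_add: "Ssum n x (a + b) f = Ssum n x a (\<lambda>k. Ssum n x b (\<lambda>l. f (k + l)))"
proof (induction a arbitrary: f)
  case 0
  then show ?case by (simp add: Ssum_0)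
next
  case (Suc a)
  show ?case unfolding add_Suc Ssum_Suc Suc.IH by (simp add: add.assoc)
qed

lemma Lf_sum: "finite I \<Longrightarrow> Lf D f (\<Sum>i\<in>I. P i) = (\<Sum>i\<in>I. Lf D f (P i))"
  unfolding Lf_def coeff_sum by (simp add: sum_distrib_left sum.swap[of _ I])

lemma Lf_degree: assumes "degree P < D" shows "Lf D f P = (\<Sum>k\<le>degree P. f k * coeff P k)"
  unfolding Lf_def
  by (rule sum.mono_neutral_left[symmetric]) (use assms in \<open>auto simp: coeff_eq_0\<close>)

lemma Lf_indep: "degree P < D1 \<Longrightarrow> degree P < D2 \<Longrightarrow> Lf D1 f P = Lf D2 f P"
  by (simp add: Lf_degree)

lemma Lf_shift: "Lf (D + j) f (monom c j * P) = c * Lf D (\<lambda>k. f (j + k)) P"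
proof -
  have split: "{..<D + j} = {..<j} \<union> {0 + j..<D + j}" by auto
  have "Lf (D + j) f (monom c j * P) = (\<Sum>k\<in>{0 + j..<D + j}. f k * (c * coeff P (k - j)))"
    unfolding Lf_def coeff_monom_mult split by (subst sum.union_disjoint) auto
  also have "\<dots> = (\<Sum>k\<in>{0..<D}. f (k + j) * (c * coeff P k))"
    by (subst sum.shift_bounds_nat_ivl) simp
  also have "\<dots> = c * Lf D (\<lambda>k. f (j + k)) P"
    unfolding Lf_def by (simp add: sum_distrib_left atLeast0LessThan algebra_simps)
  finally show ?thesis .
qed

lemma degree_pp: "degree (pp n x) \<le> n - 1"
  unfolding pp_def
  by (rule degree_sum_le) (auto intro: order.trans[OF degree_monom_le])

lemma coeff_pp: "coeff (pp n x) k = (if k < n then x k else 0)"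
  unfolding pp_def coeff_sum by (simp add: coeff_monom)

lemma degree_pp_pow: "degree (pp n x ^ r) \<le> r * (n - 1)"
  using degree_power_le[of "pp n x" r] degree_pp[of n x]
  by (metis le_trans mult.commute mult_le_mono1)

lemma degree_monom_mult_le: "degree (monom c j * P) \<le> j + degree P"
  using degree_mult_le[of "monom c j" P] degree_monom_le[of c j] by linarith

lemma Ssum_poly: "Ssum n x r f = Lf (r * (n - 1) + 1) f (pp n x ^ r)"
proof (induction r arbitrary: f)
  case 0
  then show ?case by (simp add: Ssum_0 Lf_def)
next
  case (Suc r)
  define D where "D = r * (n - 1) + 1"
  define D' where "D' = Suc r * (n - 1) + 1"
  have "Ssum n x (Suc r) f = (\<Sum>i<n. x i * Lf D (\<lambda>k. f (i + k)) (pp n x ^ r))"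
    unfolding Ssum_Suc Suc.IH D_def ..
  also have "\<dots> = (\<Sum>i<n. Lf D' f (monom (x i) i * pp n x ^ r))"
  proof (rule sum.cong[OF refl])
    fix i assume i: "i \<in> {..<n}"
    have dg: "degree (monom (x i) i * pp n x ^ r) \<le> i + r * (n - 1)"
      using degree_monom_mult_le[of "x i" i "pp n x ^ r"] degree_pp_pow[of n x r] by linarith
    have "x i * Lf D (\<lambda>k. f (i + k)) (pp n x ^ r) = Lf (D + i) f (monom (x i) i * pp n x ^ r)"
      by (simp add: Lf_shift)
    also have "\<dots> = Lf D' f (monom (x i) i * pp n x ^ r)"
      by (rule Lf_indep) (use dg i in \<open>auto simp: D_def D'_def\<close>)
    finally show "x i * Lf D (\<lambda>k. f (i + k)) (pp n x ^ r) = Lf D' f (monom (x i) i * pp n x ^ r)" .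
  qed
  also have "\<dots> = Lf D' f (\<Sum>i<n. monom (x i) i * pp n x ^ r)"
    by (simp add: Lf_sum)
  also have "(\<Sum>i<n. monom (x i) i * pp n x ^ r) = pp n x ^ Suc r"
    unfolding pp_def by (simp add: sum_distrib_right)
  finally show ?case unfolding D'_def .
qed

lemma Lf_Bf: "Lf K (\<lambda>a. Lf K (\<lambda>b. h (a + b)) V) U = Bf K h (coeff U) (coeff V)"
  unfolding Lf_def Bf_def by (simp add: sum_distrib_left sum_distrib_right algebra_simps)

lemma Bf_sym: "Bf K h u v = Bf K h v u"
  unfolding Bf_def by (subst sum.swap) (simp add: add.commute algebra_simps)

lemma lin_zero:
  fixes a b :: real
  assumes "\<And>t. 0 \<le> a + 2*t*b"
  shows "b = 0"
proof (rule ccontr)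
  assume b: "b \<noteq> 0"
  have "0 \<le> a + 2 * (-(\<bar>a\<bar>+1)/(2*b)) * b" by (rule assms)
  also have "\<dots> = a - \<bar>a\<bar> - 1" using b by (simp add: field_simps)
  finally show False by linarith
qed

lemma Bf_psd_zero:
  assumes psd: "\<And>w. 0 \<le> Bf K h w w" and z: "Bf K h u u = 0"
  shows "Bf K h u v = 0"
proof -
  have exp: "Bf K h (\<lambda>i. v i + t * u i) (\<lambda>i. v i + t * u i) = Bf K h v v + t * (Bf K h u v + Bf K h v u) + t^2 * Bf K h u u" for t
    unfolding Bf_def by (simp add: sum.distrib sum_distrib_left power2_eq_square algebra_simps)
  have "0 \<le> Bf K h v v + 2 * t * Bf K h u v" for t
    using psd[of "\<lambda>i. v i + t * u i"] unfolding exp z Bf_sym[of K h v u] by simp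
  from lin_zero[OF this] show ?thesis .
qed

lemma tensor_Ssum: "tensor_apply m n (hankel_tensor h) x i = Ssum n x (m - 1) (\<lambda>k. h (i + k))"
  unfolding tensor_apply_def hankel_tensor_def Ssum_def Lset_def by simp

lemma tensor_main:
  fixes m n K :: nat and h :: "nat \<Rightarrow> real" and lam :: real
  assumes m2: "m \<ge> 2" and n1: "n \<ge> 1" and ev: "even (m * (n - 1))"
    and K: "K = m * (n - 1) div 2 + 1"
    and eig: "H_eigenvalue m n (hankel_tensor h) lam"
  shows "((\<forall>u. 0 \<le> Bf K h u u) \<longrightarrow> \<not> lam < 0) \<and>
         ((\<forall>u. (\<exists>i<K. u i \<noteq> 0) \<longrightarrow> 0 < Bf K h u u) \<longrightarrow> \<not> lam \<le> 0)"
proof -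
  from eig obtain x where xnz: "\<exists>i<n. x i \<noteq> 0"
    and xe: "\<forall>i<n. tensor_apply m n (hankel_tensor h) x i = lam * x i ^ (m - 1)"
    unfolding H_eigenvalue_def by blast
  define ta where "ta i = Ssum n x (m - 1) (\<lambda>k. h (i + k))" for i
  have ta: "ta i = lam * x i ^ (m - 1)" if "i < n" for i
    using xe that unfolding ta_def tensor_Ssum by auto
  have pnz: "pp n x \<noteq> 0"
  proof
    assume "pp n x = 0"
    hence "x i = 0" if "i < n" for i using coeff_pp[of n x i] that by simp
    thus False using xnz by auto
  qed
  have lc: "coeff (pp n x ^ s) (degree (pp n x ^ s)) \<noteq> 0" for s
    using pnz by simp
  show ?thesis
  proof (cases "even m")
    case True
    then obtain s where ms: "m = 2 * s" by blast
    have s1: "s \<ge> 1" using ms m2 by simp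
    have Kd: "K = s * (n - 1) + 1" using K ms by simp
    define P where "P = pp n x ^ s"
    have dP: "degree P < K" unfolding P_def Kd using degree_pp_pow[of n x s] by simp
    have msuc: "m = Suc (m - 1)" using m2 by simp
    have "(\<Sum>i<n. x i * ta i) = Ssum n x (Suc (m - 1)) h"
      unfolding Ssum_Suc ta_def by simp
    also have "\<dots> = Ssum n x (s + s) h" using ms msuc by (metis mult_2)
    also have "\<dots> = Bf K h (coeff P) (coeff P)"
      by (subst Ssum_add) (simp only: Ssum_poly Kd[symmetric] P_def[symmetric] Lf_Bf)
    finally have eq1: "(\<Sum>i<n. x i * ta i) = Bf K h (coeff P) (coeff P)" .
    have "(\<Sum>i<n. x i * ta i) = (\<Sum>i<n. lam * x i ^ m)"
    proof (rule sum.cong[OF refl])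
      fix i assume "i \<in> {..<n}"
      hence "x i * ta i = lam * (x i * x i ^ (m - 1))" using ta by simp
      also have "x i * x i ^ (m - 1) = x i ^ m" using msuc by (metis power_Suc)
      finally show "x i * ta i = lam * x i ^ m" .
    qed
    hence eq2: "Bf K h (coeff P) (coeff P) = lam * (\<Sum>i<n. x i ^ m)"
      using eq1 by (simp add: sum_distrib_left)
    have spos: "0 < (\<Sum>i<n. x i ^ m)"
    proof -
      from xnz obtain i0 where i0: "i0 < n" "x i0 \<noteq> 0" by auto
      show ?thesis
        by (rule sum_pos2[of _ i0]) (use i0 True in \<open>auto simp: zero_le_even_power zero_less_power_eq\<close>)
    qed
    show ?thesis
    proof (intro conjI impI)
      assume "\<forall>u. 0 \<le> Bf K h u u"
      hence "0 \<le> lam * (\<Sum>i<n. x i ^ m)" using eq2 by metis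
      thus "\<not> lam < 0" using spos by (simp add: zero_le_mult_iff)
    next
      assume pd: "\<forall>u. (\<exists>i<K. u i \<noteq> 0) \<longrightarrow> 0 < Bf K h u u"
      have "\<exists>i<K. coeff P i \<noteq> 0"
        using dP lc[of s] unfolding P_def by blast
      hence "0 < lam * (\<Sum>i<n. x i ^ m)" using pd eq2 by metis
      thus "\<not> lam \<le> 0" using spos by (simp add: zero_less_mult_iff)
    qed
  next
    case False
    then obtain s where ms: "m = 2 * s + 1" using oddE by blast
    have s1: "s \<ge> 1" using ms m2 by simp
    have "even (n - 1)" using ev False by simp
    then obtain e where ne: "n - 1 = 2 * e" by blast
    have "m * (n - 1) = 2 * ((2 * s + 1) * e)" unfolding ne ms by (simp add: algebra_simps)
    hence Kd: "K = 2 * s * e + e + 1" using K by (simp add: algebra_simps)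
    define P where "P = pp n x ^ s"
    define D where "D = s * (n - 1) + 1"
    have se: "s * (n - 1) = 2 * s * e" unfolding ne by simp
    have dP: "degree P \<le> 2 * s * e" unfolding P_def using degree_pp_pow[of n x s] se
      by (metis)
    have D2: "D = 2 * s * e + 1" unfolding D_def se ..
    define W where "W j = coeff (monom 1 j * P)" for j
    have shiftK: "Lf D (\<lambda>b. g (j + b)) P = Lf K g (monom 1 j * P)" if "j \<le> e" for g j
    proof -
      have "Lf D (\<lambda>b. g (j + b)) P = Lf (D + j) g (monom 1 j * P)"
        by (simp add: Lf_shift)
      also have "\<dots> = Lf K g (monom 1 j * P)"
        by (rule Lf_indep) (use degree_monom_mult_le[of 1 j P] dP that in \<open>auto simp: D2 Kd\<close>)
      finally show ?thesis .
    qed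
    have key: "ta i = Bf K h (W j) (W j')" if "j + j' = i" "j \<le> e" "j' \<le> e" for i j j'
    proof -
      have "ta i = Ssum n x (s + s) (\<lambda>k. h (i + k))" unfolding ta_def using ms by (simp add: mult_2)
      also have "\<dots> = Lf D (\<lambda>a. Lf D (\<lambda>b. h (i + (a + b))) P) P"
        by (subst Ssum_add) (simp only: Ssum_poly D_def P_def)
      also have "\<dots> = Lf D (\<lambda>a. Lf D (\<lambda>b. (\<lambda>b'. h (j + a + b')) (j' + b)) P) P"
        using that(1) by (simp add: algebra_simps)
      also have "\<dots> = Lf D (\<lambda>a. Lf K (\<lambda>b'. h (j + a + b')) (monom 1 j' * P)) P"
      proof -
        have "Lf D (\<lambda>b. h (j + a + (j' + b))) P = Lf K (\<lambda>b'. h (j + a + b')) (monom 1 j' * P)" for a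
          using shiftK[OF that(3), of "\<lambda>b'. h (j + a + b')"] by simp
        thus ?thesis by simp
      qed
      also have "\<dots> = Lf K (\<lambda>a'. Lf K (\<lambda>b'. h (a' + b')) (monom 1 j' * P)) (monom 1 j * P)"
        using shiftK[OF that(2), of "\<lambda>a'. Lf K (\<lambda>b'. h (a' + b')) (monom 1 j' * P)"] by simp
      also have "\<dots> = Bf K h (W j) (W j')" unfolding Lf_Bf W_def ..
      finally show ?thesis .
    qed
    have xpow: "0 \<le> x i ^ (m - 1)" for i using ms by (simp add: zero_le_even_power)
    show ?thesis
    proof (intro conjI impI notI)
      assume psd: "\<forall>u. 0 \<le> Bf K h u u" and lneg: "lam < 0"
      have z: "Bf K h (W j) (W j) = 0" if "j \<le> e" for j
      proof -
        have "2 * j < n" using that ne n1 by linarith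
        hence "Bf K h (W j) (W j) = lam * x (2 * j) ^ (m - 1)"
          using key[of j j "2 * j"] ta[of "2 * j"] that by simp
        also have "\<dots> \<le> 0" using lneg xpow by (simp add: mult_nonpos_nonneg)
        finally show ?thesis using psd by (meson order_antisym)
      qed
      have "x i = 0" if i: "i < n" for i
      proof -
        have le: "i div 2 \<le> e" "i - i div 2 \<le> e" using i ne n1 by linarith+
        have "ta i = Bf K h (W (i div 2)) (W (i - i div 2))"
          by (rule key) (use le in auto)
        also have "\<dots> = 0"
          by (rule Bf_psd_zero[OF _ z[OF le(1)]]) (use psd in auto)
        finally have "lam * x i ^ (m - 1) = 0" using ta[OF i] by simp
        thus ?thesis using lneg by simp
      qed
      thus False using xnz by auto
    next
      assume pd: "\<forall>u. (\<exists>i<K. u i \<noteq> 0) \<longrightarrow> 0 < Bf K h u u" and lnp: "lam \<le> 0"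
      have W0: "W 0 = coeff P" unfolding W_def by simp
      have "\<exists>i<K. W 0 i \<noteq> 0"
        using dP lc[of s] unfolding W0 P_def Kd by (intro exI[of _ "degree (pp n x ^ s)"]) auto
      hence "0 < Bf K h (W 0) (W 0)" using pd by blast
      also have "Bf K h (W 0) (W 0) = ta 0" using key[of 0 0 0] by simp
      also have "ta 0 = lam * x 0 ^ (m - 1)" using ta n1 by simp
      also have "\<dots> \<le> 0" using lnp xpow by (simp add: mult_nonpos_nonneg)
      finally show False by simp
    qed
  qed
qed


lemma neg_H_eig:
  assumes "H_eigenvalue m n (hankel_tensor h) lam"
  shows "H_eigenvalue m n (hankel_tensor (\<lambda>k. - h k)) (- lam)"
proof -
  have ta: "tensor_apply m n (hankel_tensor (\<lambda>k. - h k)) x i = - tensor_apply m n (hankel_tensor h) x i" for x i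
    unfolding tensor_apply_def hankel_tensor_def by (simp add: sum_negf)
  from assms show ?thesis unfolding H_eigenvalue_def ta by auto
qed

lemma to_eig:
  assumes K: "K = m * (n - 1) div 2 + 1"
    and nz: "\<exists>i<K. v i \<noteq> 0" and ev: "\<forall>i<K. (\<Sum>j<K. h (i + j) * v j) = \<mu> * v i"
  shows "eigenvalue (hankel_matrix m n h) \<mu>"
proof -
  have dr: "dim_row (hankel_matrix m n h) = K" "dim_col (hankel_matrix m n h) = K"
    unfolding hankel_matrix_def K by simp_all
  have "eigenvector (hankel_matrix m n h) (vec K v) \<mu>"
    unfolding eigenvector_def dr
  proof (intro conjI)
    show "vec K v \<in> carrier_vec K" by simp
    show "vec K v \<noteq> 0\<^sub>v K"
    proof
      assume "vec K v = 0\<^sub>v K"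
      hence "\<forall>i<K. v i = 0" by (metis index_vec index_zero_vec(1))
      thus False using nz by auto
    qed
    show "hankel_matrix m n h *\<^sub>v vec K v = \<mu> \<cdot>\<^sub>v vec K v"
    proof (rule eq_vecI)
      show "dim_vec (hankel_matrix m n h *\<^sub>v vec K v) = dim_vec (\<mu> \<cdot>\<^sub>v vec K v)" using dr by simp
      fix i assume "i < dim_vec (\<mu> \<cdot>\<^sub>v vec K v)"
      hence i: "i < K" by simp
      have "(hankel_matrix m n h *\<^sub>v vec K v) $ i = (\<Sum>j<K. h (i + j) * v j)"
        using i dr unfolding mult_mat_vec_def scalar_prod_def
        by (simp add: hankel_matrix_def K[symmetric] atLeast0LessThan)
      also have "\<dots> = \<mu> * v i" using ev i by simp
      finally show "(hankel_matrix m n h *\<^sub>v vec K v) $ i = (\<mu> \<cdot>\<^sub>v vec K v) $ i" using i by simp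
    qed
  qed
  thus ?thesis unfolding eigenvalue_def by blast
qed

lemma nr_pos: "(\<exists>i<K. (u::nat\<Rightarrow>real) i \<noteq> 0) \<Longrightarrow> 0 < (\<Sum>i<K. u i ^ 2)"
  by (metis (no_types, lifting) finite_lessThan lessThan_iff power_not_zero sum_pos2 zero_le_power2 zero_less_power2)

theorem theorem5:
  fixes m n :: nat and h :: "nat \<Rightarrow> real"
  assumes "m \<ge> 2" and "n \<ge> 1" and "even (m * (n - 1))"
  shows "((\<forall>\<mu>. eigenvalue (hankel_matrix m n h) \<mu> \<longrightarrow> \<not> \<mu> < 0) \<longrightarrow>
            (\<forall>lam. H_eigenvalue m n (hankel_tensor h) lam \<longrightarrow> \<not> lam < 0))
       \<and> ((\<forall>\<mu>. eigenvalue (hankel_matrix m n h) \<mu> \<longrightarrow> \<not> \<mu> \<le> 0) \<longrightarrow>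
            (\<forall>lam. H_eigenvalue m n (hankel_tensor h) lam \<longrightarrow> \<not> lam \<le> 0))
       \<and> ((\<forall>\<mu>. eigenvalue (hankel_matrix m n h) \<mu> \<longrightarrow> \<not> \<mu> > 0) \<longrightarrow>
            (\<forall>lam. H_eigenvalue m n (hankel_tensor h) lam \<longrightarrow> \<not> lam > 0))
       \<and> ((\<forall>\<mu>. eigenvalue (hankel_matrix m n h) \<mu> \<longrightarrow> \<not> \<mu> \<ge> 0) \<longrightarrow>
            (\<forall>lam. H_eigenvalue m n (hankel_tensor h) lam \<longrightarrow> \<not> lam \<ge> 0))"
proof -
  define K where "K = m * (n - 1) div 2 + 1"
  have K0: "K > 0" unfolding K_def by simp
  obtain v \<mu> where v: "\<exists>i<K. v i \<noteq> 0" "\<forall>i<K. (\<Sum>j<K. h (i + j) * v j) = \<mu> * v i"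
    and ray: "\<forall>u. \<mu> * (\<Sum>i<K. u i ^ 2) \<le> Bf K h u u"
    using sym_min_eig[OF K0, of "\<lambda>i j. h (i + j)"] unfolding Bf_def by (auto simp: add.commute)
  have eig1: "eigenvalue (hankel_matrix m n h) \<mu>" by (rule to_eig[OF K_def v])
  obtain v' \<mu>' where v': "\<exists>i<K. v' i \<noteq> 0" "\<forall>i<K. (\<Sum>j<K. - h (i + j) * v' j) = \<mu>' * v' i"
    and ray': "\<forall>u. \<mu>' * (\<Sum>i<K. u i ^ 2) \<le> Bf K (\<lambda>k. - h k) u u"
    using sym_min_eig[OF K0, of "\<lambda>i j. - h (i + j)"] unfolding Bf_def by (auto simp: add.commute)
  have "\<forall>i<K. (\<Sum>j<K. h (i + j) * v' j) = (- \<mu>') * v' i"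
  proof (intro allI impI)
    fix i assume "i < K"
    hence "(\<Sum>j<K. - h (i + j) * v' j) = \<mu>' * v' i" using v' by auto
    thus "(\<Sum>j<K. h (i + j) * v' j) = (- \<mu>') * v' i" by (simp add: sum_negf)
  qed
  hence eig2: "eigenvalue (hankel_matrix m n h) (- \<mu>')" by (rule to_eig[OF K_def v'(1)])
  note TM = tensor_main[OF assms K_def]
  note TM' = tensor_main[OF assms K_def, of "\<lambda>k. - h k"]
  show ?thesis
  proof (intro conjI impI allI)
    fix lam
    assume H: "\<forall>\<mu>. eigenvalue (hankel_matrix m n h) \<mu> \<longrightarrow> \<not> \<mu> < 0"
      and L: "H_eigenvalue m n (hankel_tensor h) lam"
    have "\<mu> \<ge> 0" using H eig1 by force
    hence "\<forall>u. 0 \<le> Bf K h u u" using ray by (meson order_trans sum_nonneg zero_le_power2 mult_nonneg_nonneg)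
    thus "\<not> lam < 0" using TM[OF L] by blast
  next
    fix lam
    assume H: "\<forall>\<mu>. eigenvalue (hankel_matrix m n h) \<mu> \<longrightarrow> \<not> \<mu> \<le> 0"
      and L: "H_eigenvalue m n (hankel_tensor h) lam"
    have mp: "\<mu> > 0" using H eig1 by force
    have "\<forall>u. (\<exists>i<K. u i \<noteq> 0) \<longrightarrow> 0 < Bf K h u u"
      using ray mp nr_pos by (meson less_le_trans mult_pos_pos)
    thus "\<not> lam \<le> 0" using TM[OF L] by blast
  next
    fix lam
    assume H: "\<forall>\<mu>. eigenvalue (hankel_matrix m n h) \<mu> \<longrightarrow> \<not> \<mu> > 0"
      and L: "H_eigenvalue m n (hankel_tensor h) lam"
    have "\<mu>' \<ge> 0" using H eig2 by force
    hence "\<forall>u. 0 \<le> Bf K (\<lambda>k. - h k) u u" using ray' by (meson order_trans sum_nonneg zero_le_power2 mult_nonneg_nonneg)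
    hence "\<not> - lam < 0" using TM'[OF neg_H_eig[OF L]] by blast
    thus "\<not> lam > 0" by simp
  next
    fix lam
    assume H: "\<forall>\<mu>. eigenvalue (hankel_matrix m n h) \<mu> \<longrightarrow> \<not> \<mu> \<ge> 0"
      and L: "H_eigenvalue m n (hankel_tensor h) lam"
    have mp: "\<mu>' > 0" using H eig2 by force
    have "\<forall>u. (\<exists>i<K. u i \<noteq> 0) \<longrightarrow> 0 < Bf K (\<lambda>k. - h k) u u"
      using ray' mp nr_pos by (meson less_le_trans mult_pos_pos)
    hence "\<not> - lam \<le> 0" using TM'[OF neg_H_eig[OF L]] by blast
    thus "\<not> lam \<ge> 0" by simp
  qed
qed

end
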